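(* Let $G$ be the $m\times n$ grid with $m,n\ge 2$ and a cost function $c:V\to\mathbb{Q}_{\ge 0}$. (i) For every zigzag sequence $q_1,\dots,q_{2k}$ and every sequence $t_1,\dots,t_{2k}$ corresponding to it, the set $\{t_1,\dots,t_{2k}\}$ is a landmark set of $G$. (ii) Let $L$ be a landmark set of $G$ with $|L|\ge 4$ that is both minimal (with respect to inclusion) and of minimum cost. Then, after possibly renumbering the rows and columns of the grid by one of its eight symmetries (with the costs carried along), the vertices of $L$ can be ordered as $t_1,\dots,t_{2k}$ forming a perfect sequence for some zigzag sequence.
   Context: The $m\times n$ grid $G$ has vertex set $V=\{(i,j):1\le i\le m,\ 1\le j\le n\}$, with $(i_1,j_1),(i_2,j_2)$ adjacent iff $|i_1-i_2|+|j_1-j_2|=1$; thus $d((i_1,j_1),(i_2,j_2))=|i_1-i_2|+|j_1-j_2|$. The first coordinate is the row (row $1$ on top, row $m$ at the bottom) and the second is the column. A vertex $x$ separates $u,v$ if $d(x,u)\neq d(x,v)$. A landmark set is $L\subseteq V$ such that every pair of distinct vertices is separated by some vertex of $L$; it is minimal if no proper subset is a landmark set, and of minimum cost if $c(L)=\sum_{a\in L}c(a)$ is smallest among all landmark sets. The eight symmetries of the grid correspond to choosing which corner is numbered $(1,1)$ and which of its two neighbours is numbered $(1,2)$ (this may exchange the roles of $m$ and $n$). A zigzag sequence is a sequence $q_1,\dots,q_{2k}$ of vertices, $k\ge 2$, $q_i=(s_i,d_i)$, with $s_1=1$, $s_{2k}=m$; for even $i$: $d_i=d_{i-1}$ and $s_i>s_{i-1}$;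 for odd $i\ge 3$: $s_i=s_{i-1}$ and $d_i>d_{i-1}$. A sequence $t_1,\dots,t_{2k}$, $t_i=(b_i,c_i)$, corresponds to this zigzag sequence if $t_1=q_1$; for even $i$: $b_i=s_i$ and $c_i\le d_i$; for odd $i\ge 3$: $c_i=d_i$ and $b_i\le s_i$; and moreover $c_{2k}>c_1$. A corresponding sequence is perfect if its total cost $\sum_i c(t_i)$ is minimum among all sequences corresponding to the same zigzag sequence. *)

theory Defs
  imports Complex_Main
begin

type_synonym vertex = "nat \<times> nat"

text \<open>Vertex set of the m x n grid: (row, column), 1-based.\<close>
definition grid_V :: "nat \<Rightarrow> nat \<Rightarrow> vertex set" where
  "grid_V m n = {(i, j). 1 \<le> i \<and> i \<le> m \<and> 1 \<le> j \<and> j \<le> n}"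

definition grid_dist :: "vertex \<Rightarrow> vertex \<Rightarrow> int" where
  "grid_dist u v = \<bar>int (fst u) - int (fst v)\<bar> + \<bar>int (snd u) - int (snd v)\<bar>"

definition separates :: "vertex \<Rightarrow> vertex \<Rightarrow> vertex \<Rightarrow> bool" where
  "separates x u v \<longleftrightarrow> grid_dist x u \<noteq> grid_dist x v"

definition landmark_set :: "nat \<Rightarrow> nat \<Rightarrow> vertex set \<Rightarrow> bool" where
  "landmark_set m n L \<longleftrightarrow> L \<subseteq> grid_V m n \<and>
     (\<forall>u\<in>grid_V m n. \<forall>v\<in>grid_V m n. u \<noteq> v \<longrightarrow> (\<exists>x\<in>L. separates x u v))"

definition minimal_landmark_set :: "nat \<Rightarrow> nat \<Rightarrow> vertex set \<Rightarrow> bool" where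
  "minimal_landmark_set m n L \<longleftrightarrow> landmark_set m n L \<and> (\<forall>L'. L' \<subset> L \<longrightarrow> \<not> landmark_set m n L')"

definition min_cost_landmark_set :: "nat \<Rightarrow> nat \<Rightarrow> (vertex \<Rightarrow> rat) \<Rightarrow> vertex set \<Rightarrow> bool" where
  "min_cost_landmark_set m n c L \<longleftrightarrow> landmark_set m n L \<and>
     (\<forall>L'. landmark_set m n L' \<longrightarrow> sum c L \<le> sum c L')"

definition zigzag :: "nat \<Rightarrow> nat \<Rightarrow> nat \<Rightarrow> (nat \<Rightarrow> vertex) \<Rightarrow> bool" where
  "zigzag m n k q \<longleftrightarrow> k \<ge> 2 \<and> (\<forall>i\<in>{1..2*k}. q i \<in> grid_V m n) \<and>
     fst (q 1) = 1 \<and> fst (q (2*k)) = m \<and>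
     (\<forall>i\<in>{2..2*k}.
        (even i \<longrightarrow> snd (q i) = snd (q (i-1)) \<and> fst (q i) > fst (q (i-1))) \<and>
        (odd i \<longrightarrow> fst (q i) = fst (q (i-1)) \<and> snd (q i) > snd (q (i-1))))"

definition corresponds :: "nat \<Rightarrow> nat \<Rightarrow> nat \<Rightarrow> (nat \<Rightarrow> vertex) \<Rightarrow> (nat \<Rightarrow> vertex) \<Rightarrow> bool" where
  "corresponds m n k q t \<longleftrightarrow> (\<forall>i\<in>{1..2*k}. t i \<in> grid_V m n) \<and>
     t 1 = q 1 \<and>
     (\<forall>i\<in>{2..2*k}.
        (even i \<longrightarrow> fst (t i) = fst (q i) \<and> snd (t i) \<le> snd (q i)) \<and>
        (odd i \<longrightarrow> snd (t i) = snd (q i) \<and> fst (t i) \<le> fst (q i))) \<and>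
     snd (t (2*k)) > snd (t 1)"

definition seq_cost :: "(vertex \<Rightarrow> rat) \<Rightarrow> nat \<Rightarrow> (nat \<Rightarrow> vertex) \<Rightarrow> rat" where
  "seq_cost c k t = (\<Sum>i=1..2*k. c (t i))"

definition perfect :: "nat \<Rightarrow> nat \<Rightarrow> (vertex \<Rightarrow> rat) \<Rightarrow> nat \<Rightarrow> (nat \<Rightarrow> vertex) \<Rightarrow> (nat \<Rightarrow> vertex) \<Rightarrow> bool" where
  "perfect m n c k q t \<longleftrightarrow> corresponds m n k q t \<and>
     (\<forall>t'. corresponds m n k q t' \<longrightarrow> seq_cost c k t \<le> seq_cost c k t')"

text \<open>The eight symmetries, encoded as (swap, flip rows, flip columns).\<close>
type_synonym gsym = "bool \<times> bool \<times> bool"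

definition grid_sym :: "gsym \<Rightarrow> nat \<Rightarrow> nat \<Rightarrow> vertex \<Rightarrow> vertex" where
  "grid_sym s m n v = (case s of (sw, fr, fc) \<Rightarrow>
     (let i' = (if fr then m + 1 - fst v else fst v);
          j' = (if fc then n + 1 - snd v else snd v)
      in if sw then (j', i') else (i', j')))"

definition grid_sym_inv :: "gsym \<Rightarrow> nat \<Rightarrow> nat \<Rightarrow> vertex \<Rightarrow> vertex" where
  "grid_sym_inv s m n w = (case s of (sw, fr, fc) \<Rightarrow>
     (let p = (if sw then (snd w, fst w) else w)
      in (if fr then m + 1 - fst p else fst p, if fc then n + 1 - snd p else snd p)))"

definition grid_sym_dims :: "gsym \<Rightarrow> nat \<Rightarrow> nat \<Rightarrow> nat \<times> nat" where
  "grid_sym_dims s m n = (if fst s then (n, m) else (m, n))"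

end

theory Submission
  imports Defs
begin


definition cutA :: "nat \<Rightarrow> nat \<Rightarrow> vertex set \<Rightarrow> bool" where
  "cutA m n X \<longleftrightarrow> (\<forall>i j. 1 \<le> i \<longrightarrow> i < m \<longrightarrow> 1 \<le> j \<longrightarrow> j < n \<longrightarrow>
     (\<exists>x\<in>X. (fst x \<le> i \<and> j < snd x) \<or> (i < fst x \<and> snd x \<le> j)))"

definition cutD :: "nat \<Rightarrow> nat \<Rightarrow> vertex set \<Rightarrow> bool" where
  "cutD m n X \<longleftrightarrow> (\<forall>i j. 1 \<le> i \<longrightarrow> i < m \<longrightarrow> 1 \<le> j \<longrightarrow> j < n \<longrightarrow>
     (\<exists>x\<in>X. (fst x \<le> i \<and> snd x \<le> j) \<or> (i < fst x \<and> j < snd x)))"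

lemma diag_arith:
  fixes a b i1 i2 j1 j2 :: nat
  assumes "\<bar>int a - int i1\<bar> + \<bar>int b - int j1\<bar> = \<bar>int a - int i2\<bar> + \<bar>int b - int j2\<bar>"
    "i1 < i2" "j1 < j2"
  shows "(a \<le> (i1+i2-1) div 2 \<and> b > (j1+j2) div 2) \<or> (a > (i1+i2-1) div 2 \<and> b \<le> (j1+j2) div 2)"
proof -
  define I where "I = (i1+i2-1) div 2"
  define J where "J = (j1+j2) div 2"
  have i: "2*I \<le> i1+i2-1" "i1+i2-1 \<le> 2*I+1" unfolding I_def by auto
  have j: "2*J \<le> j1+j2" "j1+j2 \<le> 2*J+1" unfolding J_def by auto
  show ?thesis unfolding I_def[symmetric] J_def[symmetric]
    using assms i j by (auto simp: abs_if split: if_splits)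
qed

lemma anti_arith:
  fixes a b i1 i2 j1 j2 :: nat
  assumes "\<bar>int a - int i1\<bar> + \<bar>int b - int j1\<bar> = \<bar>int a - int i2\<bar> + \<bar>int b - int j2\<bar>"
    "i1 < i2" "j2 < j1"
  shows "(a \<le> (i1+i2-1) div 2 \<and> b \<le> (j1+j2-1) div 2) \<or> (a > (i1+i2-1) div 2 \<and> b > (j1+j2-1) div 2)"
proof -
  define I where "I = (i1+i2-1) div 2"
  define J where "J = (j1+j2-1) div 2"
  have i: "2*I \<le> i1+i2-1" "i1+i2-1 \<le> 2*I+1" unfolding I_def by auto
  have j: "2*J \<le> j1+j2-1" "j1+j2-1 \<le> 2*J+1" unfolding J_def by auto
  show ?thesis unfolding I_def[symmetric] J_def[symmetric]
    using assms i j by (auto simp: abs_if split: if_splits)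
qed

lemma line_arith:
  fixes a b i1 i2 j :: nat
  assumes "\<bar>int a - int i1\<bar> + \<bar>int b - int j\<bar> = \<bar>int a - int i2\<bar> + \<bar>int b - int j\<bar>"
    "i1 < i2"
  shows "2 * a = i1 + i2"
  using assms by (auto simp: abs_if split: if_splits)

lemma nosep_lt:
  assumes mn: "2 \<le> m" "2 \<le> n" and X: "X \<subseteq> grid_V m n" and A: "cutA m n X" and D: "cutD m n X"
    and R: "\<not>(\<exists>r. 1<r \<and> r<m \<and> (\<forall>x\<in>X. fst x = r))"
    and u: "(i1,j1) \<in> grid_V m n" and v: "(i2,j2) \<in> grid_V m n" and lt: "i1 < i2"
    and H: "\<forall>x\<in>X. grid_dist x (i1,j1) = grid_dist x (i2,j2)"
  shows False
proof -
  have g: "1 \<le> i1" "i2 \<le> m" "1 \<le> j1" "j1 \<le> n" "1 \<le> j2" "j2 \<le> n"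
    using u v by (auto simp: grid_V_def)
  have H': "\<And>x. x \<in> X \<Longrightarrow> \<bar>int (fst x) - int i1\<bar> + \<bar>int (snd x) - int j1\<bar> = \<bar>int (fst x) - int i2\<bar> + \<bar>int (snd x) - int j2\<bar>"
    using H by (auto simp: grid_dist_def)
  consider "j1 < j2" | "j2 < j1" | "j1 = j2" by linarith
  then show False
  proof cases
    case 1
    define I where "I = (i1+i2-1) div 2"
    define J where "J = (j1+j2) div 2"
    have c: "1 \<le> I" "I < m" "1 \<le> J" "J < n" using g lt 1 unfolding I_def J_def by auto
    obtain x where x: "x \<in> X" "(fst x \<le> I \<and> snd x \<le> J) \<or> (I < fst x \<and> J < snd x)"
      using D c unfolding cutD_def by blast
    from diag_arith[OF H'[OF x(1)] lt 1] x(2) show False unfolding I_def J_def by auto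
  next
    case 2
    define I where "I = (i1+i2-1) div 2"
    define J where "J = (j1+j2-1) div 2"
    have c: "1 \<le> I" "I < m" "1 \<le> J" "J < n" using g lt 2 unfolding I_def J_def by auto
    obtain x where x: "x \<in> X" "(fst x \<le> I \<and> J < snd x) \<or> (I < fst x \<and> snd x \<le> J)"
      using A c unfolding cutA_def by blast
    from anti_arith[OF H'[OF x(1)] lt 2] x(2) show False unfolding I_def J_def by auto
  next
    case 3
    have "\<exists>x. x \<in> X" using A[unfolded cutA_def, rule_format, of 1 1] mn by auto
    then obtain x0 where x0: "x0 \<in> X" by blast
    have all: "\<And>x. x \<in> X \<Longrightarrow> 2 * fst x = i1 + i2"
      using line_arith H' 3 lt by metis
    have "1 < fst x0" "fst x0 < m" using all[OF x0] lt g by auto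
    moreover have "\<forall>x\<in>X. fst x = fst x0" using all x0 by (metis mult_left_cancel zero_neq_numeral)
    ultimately show False using R by blast
  qed
qed

lemma nosep_eq:
  assumes mn: "2 \<le> m" "2 \<le> n" and A: "cutA m n X"
    and C: "\<not>(\<exists>c. 1<c \<and> c<n \<and> (\<forall>x\<in>X. snd x = c))"
    and u: "(i,j1) \<in> grid_V m n" and v: "(i,j2) \<in> grid_V m n" and lt: "j1 < j2"
    and H: "\<forall>x\<in>X. grid_dist x (i,j1) = grid_dist x (i,j2)"
  shows False
proof -
  have g: "1 \<le> j1" "j2 \<le> n"
    using u v by (auto simp: grid_V_def)
  have all: "\<And>x. x \<in> X \<Longrightarrow> 2 * snd x = j1 + j2"
  proof -
    fix x assume "x \<in> X"
    then have "\<bar>int (snd x) - int j1\<bar> = \<bar>int (snd x) - int j2\<bar>" using H by (auto simp: grid_dist_def)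
    then show "2 * snd x = j1 + j2" using lt by (auto simp: abs_if split: if_splits)
  qed
  have "\<exists>x. x \<in> X" using A[unfolded cutA_def, rule_format, of 1 1] mn by auto
  then obtain x0 where x0: "x0 \<in> X" by blast
  have "1 < snd x0" "snd x0 < n" using all[OF x0] lt g by auto
  moreover have "\<forall>x\<in>X. snd x = snd x0" using all x0 by (metis mult_left_cancel zero_neq_numeral)
  ultimately show False using C by blast
qed

lemma char_rev:
  assumes mn: "2 \<le> m" "2 \<le> n" and X: "X \<subseteq> grid_V m n" and A: "cutA m n X" and D: "cutD m n X"
    and R: "\<not>(\<exists>r. 1<r \<and> r<m \<and> (\<forall>x\<in>X. fst x = r))"
    and C: "\<not>(\<exists>c. 1<c \<and> c<n \<and> (\<forall>x\<in>X. snd x = c))"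
  shows "landmark_set m n X"
  unfolding landmark_set_def
proof (intro conjI ballI impI)
  show "X \<subseteq> grid_V m n" by fact
  fix u v assume u: "u \<in> grid_V m n" and v: "v \<in> grid_V m n" and ne: "u \<noteq> v"
  show "\<exists>x\<in>X. separates x u v"
  proof (rule ccontr)
    assume "\<not> ?thesis"
    then have H: "\<forall>x\<in>X. grid_dist x u = grid_dist x v" by (auto simp: separates_def)
    obtain i1 j1 where u': "u = (i1,j1)" by (cases u)
    obtain i2 j2 where v': "v = (i2,j2)" by (cases v)
    consider "i1 < i2" | "i2 < i1" | "i1 = i2 \<and> j1 < j2" | "i1 = i2 \<and> j2 < j1"
      using ne u' v' by fastforce
    then show False
    proof cases
      case 1 then show False using nosep_lt[OF mn X A D R, of i1 j1 i2 j2] u v H u' v' by auto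
    next
      case 2 then show False using nosep_lt[OF mn X A D R, of i2 j2 i1 j1] u v H u' v' by auto
    next
      case 3 then show False using nosep_eq[OF mn A C, of i1 j1 j2] u v H u' v' by auto
    next
      case 4 then show False using nosep_eq[OF mn A C, of i1 j2 j1] u v H u' v' by auto
    qed
  qed
qed

lemma char_fwd:
  assumes mn: "2 \<le> m" "2 \<le> n" and L: "landmark_set m n X"
  shows "cutA m n X" "cutD m n X" "\<not>(\<exists>c. 1<c \<and> c<n \<and> (\<forall>x\<in>X. snd x = c))"
proof -
  have sep: "\<And>u v. u \<in> grid_V m n \<Longrightarrow> v \<in> grid_V m n \<Longrightarrow> u \<noteq> v \<Longrightarrow> \<exists>x\<in>X. grid_dist x u \<noteq> grid_dist x v"
    using L unfolding landmark_set_def separates_def by blast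
  show "cutA m n X" unfolding cutA_def
  proof (intro allI impI)
    fix i j assume c: "1 \<le> i" "i < m" "1 \<le> j" "j < n"
    obtain x where x: "x \<in> X" "grid_dist x (i, j+1) \<noteq> grid_dist x (i+1, j)"
      using sep[of "(i,j+1)" "(i+1,j)"] c by (auto simp: grid_V_def)
    then show "\<exists>x\<in>X. (fst x \<le> i \<and> j < snd x) \<or> (i < fst x \<and> snd x \<le> j)"
      by (intro bexI[of _ x]) (auto simp: grid_dist_def abs_if split: if_splits)
  qed
  show "cutD m n X" unfolding cutD_def
  proof (intro allI impI)
    fix i j assume c: "1 \<le> i" "i < m" "1 \<le> j" "j < n"
    obtain x where x: "x \<in> X" "grid_dist x (i, j) \<noteq> grid_dist x (i+1, j+1)"
      using sep[of "(i,j)" "(i+1,j+1)"] c by (auto simp: grid_V_def)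
    then show "\<exists>x\<in>X. (fst x \<le> i \<and> snd x \<le> j) \<or> (i < fst x \<and> j < snd x)"
      by (intro bexI[of _ x]) (auto simp: grid_dist_def abs_if split: if_splits)
  qed
  show "\<not>(\<exists>c. 1<c \<and> c<n \<and> (\<forall>x\<in>X. snd x = c))"
  proof
    assume "\<exists>c. 1<c \<and> c<n \<and> (\<forall>x\<in>X. snd x = c)"
    then obtain c where c: "1<c" "c<n" "\<forall>x\<in>X. snd x = c" by blast
    obtain x where x: "x \<in> X" "grid_dist x (1, c-1) \<noteq> grid_dist x (1, c+1)"
    proof -
      have "(1,c-1) \<in> grid_V m n" "(1,c+1) \<in> grid_V m n" "(1::nat,c-1) \<noteq> (1,c+1)"
        using c mn by (auto simp: grid_V_def)
      then show ?thesis using sep that by blast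
    qed
    then show False using c(3) c(1) by (auto simp: grid_dist_def)
  qed
qed

definition adjA :: "vertex \<Rightarrow> vertex \<Rightarrow> bool" where
  "adjA x y \<longleftrightarrow> (int (fst x) - int (fst y)) * (int (snd x) - int (snd y)) \<le> 0"

definition prec :: "vertex \<Rightarrow> vertex \<Rightarrow> bool" where
  "prec x y \<longleftrightarrow> fst x < fst y \<and> snd x < snd y"

lemma not_adjA: "\<not> adjA x y \<longleftrightarrow> prec x y \<or> prec y x"
  unfolding adjA_def prec_def by (auto simp: not_le zero_less_mult_iff)

lemma adjA_sym: "adjA x y \<longleftrightarrow> adjA y x"
  unfolding adjA_def by (simp add: mult.commute[of "int (fst x) - _"] algebra_simps)

lemma adjA_refl: "adjA x x" unfolding adjA_def by simp

lemma prec_trans: "prec x y \<Longrightarrow> prec y z \<Longrightarrow> prec x z"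
  unfolding prec_def by auto

lemma prec_adjA: "prec x y \<Longrightarrow> \<not> adjA x y"
  using not_adjA by blast

lemma path_landmark:
  assumes mn: "2 \<le> m" "2 \<le> n" and gr: "\<forall>k\<in>{lo..hi}. g k \<in> grid_V m n"
    and lohi: "lo \<le> hi" and r1: "fst (g lo) = 1" and rm: "fst (g hi) = m"
    and cc: "snd (g lo) \<le> snd (g hi)"
    and adj: "\<forall>k. lo \<le> k \<longrightarrow> k < hi \<longrightarrow> adjA (g k) (g (Suc k))"
    and C: "\<not>(\<exists>c. 1<c \<and> c<n \<and> (\<forall>k\<in>{lo..hi}. snd (g k) = c))"
  shows "landmark_set m n (g ` {lo..hi})"
proof (rule char_rev[OF mn])
  show "g ` {lo..hi} \<subseteq> grid_V m n" using gr by auto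
  show "cutA m n (g ` {lo..hi})" unfolding cutA_def
  proof (intro allI impI)
    fix i j assume c: "1 \<le> i" "i < m" "1 \<le> j" "j < n"
    show "\<exists>x\<in>g ` {lo..hi}. (fst x \<le> i \<and> j < snd x) \<or> (i < fst x \<and> snd x \<le> j)"
    proof (rule ccontr)
      assume neg: "\<not> ?thesis"
      have H: "\<And>k. lo \<le> k \<Longrightarrow> k \<le> hi \<Longrightarrow> (fst (g k) \<le> i \<and> snd (g k) \<le> j) \<or> (i < fst (g k) \<and> j < snd (g k))"
      proof -
        fix k assume "lo \<le> k" "k \<le> hi"
        then have "g k \<in> g ` {lo..hi}" by auto
        then show "(fst (g k) \<le> i \<and> snd (g k) \<le> j) \<or> (i < fst (g k) \<and> j < snd (g k))"
          using neg by (auto simp: not_le)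
      qed
      have NW: "lo + d \<le> hi \<Longrightarrow> fst (g (lo+d)) \<le> i \<and> snd (g (lo+d)) \<le> j" for d
      proof (induction d)
        case 0 then show ?case using H[of lo] r1 c lohi by auto
      next
        case (Suc d)
        then have ih: "fst (g (lo+d)) \<le> i \<and> snd (g (lo+d)) \<le> j" by auto
        have a: "adjA (g (lo+d)) (g (Suc (lo+d)))" using adj Suc.prems by auto
        show ?case
        proof (rule ccontr)
          assume "\<not> ?case"
          then have "i < fst (g (lo + Suc d)) \<and> j < snd (g (lo + Suc d))" using H[of "lo + Suc d"] Suc.prems by auto
          then have "prec (g (lo+d)) (g (Suc (lo+d)))" using ih unfolding prec_def by auto
          then show False using a prec_adjA by blast
        qed
      qed
      from NW[of "hi - lo"] lohi rm c show False by auto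
    qed
  qed
  show "cutD m n (g ` {lo..hi})" unfolding cutD_def
  proof (intro allI impI)
    fix i j assume c: "1 \<le> i" "i < m" "1 \<le> j" "j < n"
    show "\<exists>x\<in>g ` {lo..hi}. (fst x \<le> i \<and> snd x \<le> j) \<or> (i < fst x \<and> j < snd x)"
    proof (cases "snd (g lo) \<le> j")
      case True then show ?thesis using r1 c lohi by (intro bexI[of _ "g lo"]) auto
    next
      case False then show ?thesis using rm c cc lohi by (intro bexI[of _ "g hi"]) auto
    qed
  qed
  show "\<not>(\<exists>r. 1<r \<and> r<m \<and> (\<forall>x\<in>g ` {lo..hi}. fst x = r))"
    using r1 lohi by (metis atLeastAtMost_iff image_eqI le_refl less_irrefl)
  show "\<not>(\<exists>c. 1<c \<and> c<n \<and> (\<forall>x\<in>g ` {lo..hi}. snd x = c))"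
    using C by auto
qed

lemma adjA_SW: "fst x \<le> fst y \<Longrightarrow> snd y \<le> snd x \<Longrightarrow> adjA x y"
  unfolding adjA_def by (rule mult_nonpos_nonneg) auto

lemma adjA_NE: "fst y \<le> fst x \<Longrightarrow> snd x \<le> snd y \<Longrightarrow> adjA x y"
  unfolding adjA_def by (rule mult_nonneg_nonpos) auto

lemma part_i:
  assumes mn: "2 \<le> m" "2 \<le> n" and Z: "zigzag m n k q" and T: "corresponds m n k q t"
  shows "landmark_set m n (t ` {1..2*k})"
proof -
  have k2: "2 \<le> k" using Z by (simp add: zigzag_def)
  have zq: "\<And>i. 2 \<le> i \<Longrightarrow> i \<le> 2*k \<Longrightarrow> (even i \<longrightarrow> snd (q i) = snd (q (i-1)) \<and> fst (q i) > fst (q (i-1))) \<and>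
        (odd i \<longrightarrow> fst (q i) = fst (q (i-1)) \<and> snd (q i) > snd (q (i-1)))"
    using Z unfolding zigzag_def by auto
  have ct: "\<And>i. 2 \<le> i \<Longrightarrow> i \<le> 2*k \<Longrightarrow> (even i \<longrightarrow> fst (t i) = fst (q i) \<and> snd (t i) \<le> snd (q i)) \<and>
        (odd i \<longrightarrow> snd (t i) = snd (q i) \<and> fst (t i) \<le> fst (q i))"
    using T unfolding corresponds_def by auto
  have t1: "t 1 = q 1" using T by (simp add: corresponds_def)
  have odd_t: "\<And>i. odd i \<Longrightarrow> 1 \<le> i \<Longrightarrow> i \<le> 2*k \<Longrightarrow> fst (t i) \<le> fst (q i) \<and> snd (t i) = snd (q i)"
  proof -
    fix i :: nat assume i: "odd i" "1 \<le> i" "i \<le> 2*k"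
    show "fst (t i) \<le> fst (q i) \<and> snd (t i) = snd (q i)"
    proof (cases "i = 1")
      case True then show ?thesis using t1 by simp
    next
      case False then show ?thesis using ct[of i] i by auto
    qed
  qed
  show ?thesis
  proof (rule path_landmark[OF mn])
    show "\<forall>k'\<in>{1..2*k}. t k' \<in> grid_V m n" using T by (simp add: corresponds_def)
    show "1 \<le> 2*k" using k2 by simp
    show "fst (t 1) = 1" using t1 Z by (simp add: zigzag_def)
    show "fst (t (2*k)) = m" using ct[of "2*k"] k2 Z by (simp add: zigzag_def)
    have lt: "snd (t 1) < snd (t (2*k))" using T unfolding corresponds_def by blast
    then show "snd (t 1) \<le> snd (t (2*k))" by simp
    show "\<not>(\<exists>c. 1<c \<and> c<n \<and> (\<forall>k'\<in>{1..2*k}. snd (t k') = c))"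
    proof
      assume "\<exists>c. 1<c \<and> c<n \<and> (\<forall>k'\<in>{1..2*k}. snd (t k') = c)"
      then obtain c where "\<forall>k'\<in>{1..2*k}. snd (t k') = c" by blast
      then have "snd (t 1) = c" "snd (t (2*k)) = c" using k2 by auto
      then show False using lt by simp
    qed
    show "\<forall>i. 1 \<le> i \<longrightarrow> i < 2*k \<longrightarrow> adjA (t i) (t (Suc i))"
    proof (intro allI impI)
      fix i assume i: "1 \<le> i" "i < 2*k"
      show "adjA (t i) (t (Suc i))"
      proof (cases "odd i")
        case True
        have a: "fst (t i) \<le> fst (q i) \<and> snd (t i) = snd (q i)" using odd_t True i by auto
        have b: "fst (t (Suc i)) = fst (q (Suc i)) \<and> snd (t (Suc i)) \<le> snd (q (Suc i))"
          using ct[of "Suc i"] True i by auto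
        have c: "snd (q (Suc i)) = snd (q i) \<and> fst (q (Suc i)) > fst (q i)"
          using zq[of "Suc i"] True i by auto
        show ?thesis using a b c by (intro adjA_SW) auto
      next
        case False
        have a: "fst (t i) = fst (q i) \<and> snd (t i) \<le> snd (q i)" using ct[of i] False i by (cases "i = 1") auto
        have b: "fst (t (Suc i)) \<le> fst (q (Suc i)) \<and> snd (t (Suc i)) = snd (q (Suc i))"
          using odd_t[of "Suc i"] False i by auto
        have c: "fst (q (Suc i)) = fst (q i) \<and> snd (q (Suc i)) > snd (q i)"
          using zq[of "Suc i"] False i by auto
        show ?thesis using a b c by (intro adjA_NE) auto
      qed
    qed
  qed
qed



lemma rtranclp_path:
  assumes "R\<^sup>*\<^sup>* x y"
  shows "\<exists>f N. f 0 = x \<and> f N = y \<and> (\<forall>k<N. R (f k) (f (Suc k)))"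
  using assms
proof (induction rule: rtranclp_induct)
  case base then show ?case by (intro exI[of _ "\<lambda>_. x"] exI[of _ 0]) auto
next
  case (step y z)
  then obtain f N where f: "f 0 = x" "f N = y" "\<forall>k<N. R (f k) (f (Suc k))" by blast
  define g where "g = f(Suc N := z)"
  have "g 0 = x" "g (Suc N) = z" using f by (auto simp: g_def)
  moreover have "\<forall>k<Suc N. R (g k) (g (Suc k))"
  proof (intro allI impI)
    fix k assume "k < Suc N"
    then consider "k < N" | "k = N" by linarith
    then show "R (g k) (g (Suc k))"
      by cases (use f step in \<open>auto simp: g_def\<close>)
  qed
  ultimately show ?case by blast
qed

lemma connect:
  assumes mn: "2 \<le> m" "2 \<le> n" and X: "X \<subseteq> grid_V m n" and A: "cutA m n X"
    and u: "u \<in> X" "fst u = 1" and w: "w \<in> X" "fst w = m"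
  shows "\<exists>f N. f 0 = u \<and> f N = w \<and> (\<forall>k\<le>N. f k \<in> X) \<and> (\<forall>k<N. adjA (f k) (f (Suc k)))"
proof -
  define R where "R = (\<lambda>x y. x \<in> X \<and> y \<in> X \<and> adjA x y)"
  have fin: "finite X" using X finite_subset[of X "grid_V m n"]
  proof -
    have "grid_V m n \<subseteq> {0..m} \<times> {0..n}" by (auto simp: grid_V_def)
    then show "finite X" using X by (meson finite_SigmaI finite_atLeastAtMost finite_subset)
  qed
  have gr: "\<And>x. x \<in> X \<Longrightarrow> 1 \<le> fst x \<and> fst x \<le> m \<and> 1 \<le> snd x \<and> snd x \<le> n"
    using X by (auto simp: grid_V_def)
  have reach: "R\<^sup>*\<^sup>* u w"
  proof (rule ccontr)
    assume nw: "\<not> R\<^sup>*\<^sup>* u w"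
    define C where "C = {x \<in> X. R\<^sup>*\<^sup>* u x}"
    have key: "\<And>d c. d \<in> X \<Longrightarrow> \<not> R\<^sup>*\<^sup>* u d \<Longrightarrow> c \<in> C \<Longrightarrow> prec c d"
    proof -
      fix d c assume d: "d \<in> X" "\<not> R\<^sup>*\<^sup>* u d" and c: "c \<in> C"
      have "\<not> adjA u d" using d u unfolding R_def by (metis (mono_tags, lifting) r_into_rtranclp)
      then have pud: "prec u d" using not_adjA[of u d] gr[OF d(1)] u unfolding prec_def by auto
      have "R\<^sup>*\<^sup>* u c" using c C_def by auto
      then show "prec c d"
      proof (induction rule: rtranclp_induct)
        case base then show ?case using pud .
      next
        case (step y z)
        have "\<not> adjA z d" using step d unfolding R_def
          by (metis (mono_tags, lifting) rtranclp.rtrancl_into_rtrancl)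
        then have "prec z d \<or> prec d z" using not_adjA by blast
        moreover have "\<not> prec d z"
        proof
          assume "prec d z"
          then have "prec y z" using step.IH prec_trans by blast
          then show False using step.hyps(2) prec_adjA unfolding R_def by blast
        qed
        ultimately show ?case by blast
      qed
    qed
    have uC: "u \<in> C" using u unfolding C_def by auto
    have Cfin: "finite C" using fin unfolding C_def by auto
    define i where "i = Max (fst ` C)"
    define j where "j = Max (snd ` C)"
    have ci: "\<And>c. c \<in> C \<Longrightarrow> fst c \<le> i" "\<And>c. c \<in> C \<Longrightarrow> snd c \<le> j"
      using Cfin unfolding i_def j_def by auto
    obtain ci0 where ci0: "ci0 \<in> C" "fst ci0 = i" using Cfin uC unfolding i_def
      by (metis (mono_tags, lifting) Max_in empty_iff finite_imageI image_iff)
    obtain cj0 where cj0: "cj0 \<in> C" "snd cj0 = j" using Cfin uC unfolding j_def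
      by (metis (mono_tags, lifting) Max_in empty_iff finite_imageI image_iff)
    have pw: "prec ci0 w" "prec cj0 w" using key[OF w(1) nw] ci0 cj0 by auto
    have cut: "1 \<le> i" "i < m" "1 \<le> j" "j < n"
      using ci[OF uC] u pw ci0 cj0 gr[OF w(1)] gr[of u] u w unfolding prec_def by auto
    obtain x where x: "x \<in> X" "(fst x \<le> i \<and> j < snd x) \<or> (i < fst x \<and> snd x \<le> j)"
      using A cut unfolding cutA_def by blast
    show False
    proof (cases "x \<in> C")
      case True then show False using x ci by fastforce
    next
      case False
      then have "\<not> R\<^sup>*\<^sup>* u x" using x(1) C_def by auto
      then have "prec ci0 x" "prec cj0 x" using key[OF x(1)] ci0 cj0 by auto
      then show False using x ci0 cj0 unfolding prec_def by auto
    qed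
  qed
  obtain f N where f: "f 0 = u" "f N = w" "\<forall>k<N. R (f k) (f (Suc k))"
    using rtranclp_path[OF reach] by blast
  have "\<forall>k\<le>N. f k \<in> X"
  proof (intro allI impI)
    fix k assume "k \<le> N"
    then show "f k \<in> X"
      by (cases k) (use f u in \<open>auto simp: R_def\<close>)
  qed
  then show ?thesis using f unfolding R_def by blast
qed



definition ispath :: "vertex set \<Rightarrow> vertex \<Rightarrow> vertex \<Rightarrow> (nat \<Rightarrow> vertex) \<Rightarrow> nat \<Rightarrow> bool" where
  "ispath X u w f N \<longleftrightarrow> f 0 = u \<and> f N = w \<and> (\<forall>k\<le>N. f k \<in> X) \<and> (\<forall>k<N. adjA (f k) (f (Suc k)))"

lemma skip:
  assumes P: "ispath X u w f N" and ij: "i < j" "j \<le> N" and a: "adjA (f i) (f j)"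
  shows "ispath X u w (\<lambda>k. if k \<le> i then f k else f (k + (j - i - 1))) (N - (j - i - 1))"
proof -
  define d where "d = j - i - 1"
  define g where "g = (\<lambda>k. if k \<le> i then f k else f (k + d))"
  have f: "f 0 = u" "f N = w" "\<forall>k\<le>N. f k \<in> X" "\<forall>k<N. adjA (f k) (f (Suc k))"
    using P unfolding ispath_def by auto
  have g0: "g 0 = u" using f by (simp add: g_def)
  have Nd: "i < N - d" "N - d + d = N" using ij unfolding d_def by auto
  moreover have "g (N - d) = w" using f Nd by (simp add: g_def)
  moreover have "\<forall>k\<le>N - d. g k \<in> X"
  proof (intro allI impI)
    fix k assume "k \<le> N - d"
    then have "k \<le> i \<Longrightarrow> k \<le> N" "k + d \<le> N" using Nd by auto
    then show "g k \<in> X" using f unfolding g_def by auto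
  qed
  moreover have "\<forall>k<N - d. adjA (g k) (g (Suc k))"
  proof (intro allI impI)
    fix k assume k: "k < N - d"
    consider "k < i" | "k = i" | "i < k" by linarith
    then show "adjA (g k) (g (Suc k))"
    proof cases
      case 1 then show ?thesis using f ij by (auto simp: g_def)
    next
      case 2 then show ?thesis using a ij by (auto simp: g_def d_def)
    next
      case 3
      then have "g k = f (k + d)" "g (Suc k) = f (Suc (k + d))" by (auto simp: g_def)
      moreover have "k + d < N" using k ij by (auto simp: d_def)
      ultimately show ?thesis using f by auto
    qed
  qed
  ultimately have "ispath X u w g (N - d)" using g0 unfolding ispath_def by blast
  from this[unfolded g_def d_def] show ?thesis .
qed

lemma shortest_path:
  assumes "\<exists>f N. ispath X u w f N"
  shows "\<exists>f N. ispath X u w f N \<and> (\<forall>i j. i < j \<longrightarrow> j \<le> N \<longrightarrow> f i \<noteq> f j)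
     \<and> (\<forall>i j. i + 2 \<le> j \<longrightarrow> j \<le> N \<longrightarrow> \<not> adjA (f i) (f j))"
proof -
  have ex: "\<exists>N. (\<exists>f. ispath X u w f N)" using assms by blast
  obtain N where N: "\<exists>f. ispath X u w f N" and least: "\<And>N'. N' < N \<Longrightarrow> \<not>(\<exists>f. ispath X u w f N')"
    using ex[unfolded exists_least_iff[of "\<lambda>N. \<exists>f. ispath X u w f N"]] by blast
  obtain f where f: "ispath X u w f N" using N by blast
  have f': "f 0 = u" "f N = w" "\<forall>k\<le>N. f k \<in> X" "\<forall>k<N. adjA (f k) (f (Suc k))"
    using f unfolding ispath_def by auto
  have na: "\<not> adjA (f i) (f j)" if "i + 2 \<le> j" "j \<le> N" for i j
  proof
    assume a: "adjA (f i) (f j)"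
    have ij: "i < j" using that by auto
    have "ispath X u w (\<lambda>k. if k \<le> i then f k else f (k + (j - i - 1))) (N - (j - i - 1))"
      by (rule skip[OF f ij that(2) a])
    moreover have "N - (j - i - 1) < N" using that by auto
    ultimately show False using least by blast
  qed
  have ne: "f i \<noteq> f j" if ij0: "i < j" "j \<le> N" for i j
  proof
    assume eq: "f i = f j"
    show False
    proof (cases "j = N")
      case True
      have "ispath X u w f i" unfolding ispath_def
      proof (intro conjI)
        show "f 0 = u" by (rule f'(1))
        show "f i = w" using eq True f'(2) by simp
        show "\<forall>k\<le>i. f k \<in> X" using f'(3) ij0 by simp
        show "\<forall>k<i. adjA (f k) (f (Suc k))" using f'(4) ij0 by simp
      qed
      moreover have "i < N" using ij0 True by simp
      ultimately show False using least by blast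
    next
      case False
      then have jN: "j < N" using ij0 by simp
      have "adjA (f j) (f (Suc j))" using f'(4) jN by blast
      then have a: "adjA (f i) (f (Suc j))" using eq by simp
      have ij: "i < Suc j" "Suc j \<le> N" using ij0 jN by auto
      have "ispath X u w (\<lambda>k. if k \<le> i then f k else f (k + (Suc j - i - 1))) (N - (Suc j - i - 1))"
        by (rule skip[OF f ij a])
      moreover have "N - (Suc j - i - 1) < N" using ij0 jN by auto
      ultimately show False using least by blast
    qed
  qed
  show ?thesis
  proof (intro exI conjI allI impI)
    show "ispath X u w f N" by fact
    show "f i \<noteq> f j" if "i < j" "j \<le> N" for i j using ne that by blast
    show "\<not> adjA (f i) (f j)" if "i + 2 \<le> j" "j \<le> N" for i j using na that by blast
  qed
qed



lemma zig_from_path: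
  assumes mn: "2 \<le> m" "2 \<le> n"
    and gr: "\<forall>k\<le>N. f k \<in> grid_V m n"
    and f0: "fst (f 0) = 1" and fN: "fst (f N) = m" and f1: "1 < fst (f 1)"
    and N3: "3 \<le> N" and Nodd: "odd N"
    and pr: "\<forall>i j. i+2 \<le> j \<longrightarrow> j \<le> N \<longrightarrow> prec (f i) (f j)"
    and sw: "\<forall>k<N. even k \<longrightarrow> fst (f k) \<le> fst (f (Suc k)) \<and> snd (f (Suc k)) \<le> snd (f k)"
    and ne: "\<forall>k<N. odd k \<longrightarrow> fst (f (Suc k)) \<le> fst (f k) \<and> snd (f k) \<le> snd (f (Suc k))"
    and dist: "\<forall>i j. i<j \<longrightarrow> j \<le> N \<longrightarrow> f i \<noteq> f j"
  shows "\<exists>K q t. zigzag m n K q \<and> corresponds m n K q t \<and> inj_on t {1..2*K} \<and> t ` {1..2*K} = f ` {0..N}"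
proof -
  define K where "K = (N+1) div 2"
  have K: "2*K = N+1" "2 \<le> K" using Nodd N3 unfolding K_def by auto
  define t where "t = (\<lambda>i. f (i - 1))"
  define q where "q = (\<lambda>i. if odd i then (if i = 1 then 1 else fst (t (i-1)), snd (t i)) else (fst (t i), snd (t (i-1))))"
  have g: "\<And>k. k \<le> N \<Longrightarrow> 1 \<le> fst (f k) \<and> fst (f k) \<le> m \<and> 1 \<le> snd (f k) \<and> snd (f k) \<le> n"
    using gr by (auto simp: grid_V_def)
  have prx: "\<And>i j. i+2 \<le> j \<Longrightarrow> j \<le> N \<Longrightarrow> fst (f i) < fst (f j) \<and> snd (f i) < snd (f j)"
    using pr unfolding prec_def by blast
  have tgr: "\<And>i. 1 \<le> i \<Longrightarrow> i \<le> 2*K \<Longrightarrow> t i \<in> grid_V m n"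
    using gr K unfolding t_def by auto
  have qgr: "\<And>i. 1 \<le> i \<Longrightarrow> i \<le> 2*K \<Longrightarrow> q i \<in> grid_V m n"
  proof -
    fix i assume i: "1 \<le> i" "i \<le> 2*K"
    show "q i \<in> grid_V m n"
    proof (cases "odd i")
      case True
      show ?thesis
      proof (cases "i = 1")
        case True then show ?thesis using g[of 0] mn by (auto simp: q_def t_def grid_V_def)
      next
        case False
        then have "i - 1 - 1 \<le> N" "i - 1 \<le> N" using i K by auto
        then show ?thesis using g[of "i-1-1"] g[of "i-1"] True False by (auto simp: q_def t_def grid_V_def)
      qed
    next
      case False
      then have "i - 1 - 1 \<le> N" "i - 1 \<le> N" using i K by auto
      then show ?thesis using g[of "i-1-1"] g[of "i-1"] False by (auto simp: q_def t_def grid_V_def)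
    qed
  qed
  have Zi: "\<forall>i\<in>{2..2*K}. (even i \<longrightarrow> snd (q i) = snd (q (i-1)) \<and> fst (q i) > fst (q (i-1))) \<and>
        (odd i \<longrightarrow> fst (q i) = fst (q (i-1)) \<and> snd (q i) > snd (q (i-1)))"
  proof (intro ballI)
    fix i assume i: "i \<in> {2..2*K}"
    define j where "j = i - 2"
    have j: "i = Suc (Suc j)" "j \<le> N - 1" using i K unfolding j_def by auto
    have jN: "Suc j \<le> N" using j K i by auto
    show "(even i \<longrightarrow> snd (q i) = snd (q (i-1)) \<and> fst (q i) > fst (q (i-1))) \<and>
        (odd i \<longrightarrow> fst (q i) = fst (q (i-1)) \<and> snd (q i) > snd (q (i-1)))"
    proof (intro conjI impI)
      assume e: "even i"
      show "snd (q i) = snd (q (i-1))" using e j by (simp add: q_def t_def)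
      show "fst (q i) > fst (q (i-1))"
      proof (cases "j = 0")
        case True then show ?thesis using e j f1 by (simp add: q_def t_def)
      next
        case False
        then obtain j' where "j = Suc j'" by (cases j) auto
        then show ?thesis using e j prx[of "j'" "Suc j"] jN by (simp add: q_def t_def)
      qed
    next
      assume o: "odd i"
      show "fst (q i) = fst (q (i-1))" using o j by (simp add: q_def t_def)
      have "j \<noteq> 0" using o j by (cases j) auto
      then obtain j' where "j = Suc j'" by (cases j) auto
      then show "snd (q i) > snd (q (i-1))" using o j prx[of "j'" "Suc j"] jN by (simp add: q_def t_def)
    qed
  qed
  have Z: "zigzag m n K q" unfolding zigzag_def
  proof (intro conjI)
    show "2 \<le> K" by (rule K(2))
    show "\<forall>i\<in>{1..2*K}. q i \<in> grid_V m n" using qgr by auto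
    show "fst (q 1) = 1" by (simp add: q_def)
    show "fst (q (2*K)) = m" using fN K Nodd by (simp add: q_def t_def)
  qed (rule Zi)
  have Ti: "\<forall>i\<in>{2..2*K}. (even i \<longrightarrow> fst (t i) = fst (q i) \<and> snd (t i) \<le> snd (q i)) \<and>
        (odd i \<longrightarrow> snd (t i) = snd (q i) \<and> fst (t i) \<le> fst (q i))"
  proof (intro ballI)
    fix i assume i: "i \<in> {2..2*K}"
    define j where "j = i - 2"
    have j: "i = Suc (Suc j)" using i unfolding j_def by auto
    have jN: "j < N" using j K i by auto
    show "(even i \<longrightarrow> fst (t i) = fst (q i) \<and> snd (t i) \<le> snd (q i)) \<and>
        (odd i \<longrightarrow> snd (t i) = snd (q i) \<and> fst (t i) \<le> fst (q i))"
    proof (intro conjI impI)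
      assume e: "even i"
      show "fst (t i) = fst (q i)" using e by (simp add: q_def)
      show "snd (t i) \<le> snd (q i)" using e j sw jN by (simp add: q_def t_def)
    next
      assume o: "odd i"
      show "snd (t i) = snd (q i)" using o by (simp add: q_def)
      show "fst (t i) \<le> fst (q i)" using o j ne jN by (simp add: q_def t_def)
    qed
  qed
  have T: "corresponds m n K q t" unfolding corresponds_def
  proof (intro conjI)
    show "\<forall>i\<in>{1..2*K}. t i \<in> grid_V m n" using tgr by auto
    show "t 1 = q 1" using f0 by (simp add: q_def t_def prod_eq_iff)
    show "snd (t (2*K)) > snd (t 1)" using prx[of 0 N] N3 K by (simp add: t_def)
  qed (rule Ti)
  have I: "inj_on t {1..2*K}"
  proof (rule inj_onI)
    fix x y assume x: "x \<in> {1..2*K}" and y: "y \<in> {1..2*K}" and e: "t x = t y"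
    show "x = y"
    proof (rule ccontr)
      assume "x \<noteq> y"
      have le: "x - 1 \<le> N" "y - 1 \<le> N" using x y K by auto
      from \<open>x \<noteq> y\<close> consider "x - 1 < y - 1" | "y - 1 < x - 1" using x y by fastforce
      then show False
      proof cases
        case 1 then show False using dist[rule_format, OF 1 le(2)] e by (simp add: t_def)
      next
        case 2 then show False using dist[rule_format, OF 2 le(1)] e by (simp add: t_def)
      qed
    qed
  qed
  have Im: "t ` {1..2*K} = f ` {0..N}"
  proof
    show "t ` {1..2*K} \<subseteq> f ` {0..N}" using K by (auto simp: t_def)
    show "f ` {0..N} \<subseteq> t ` {1..2*K}"
    proof
      fix x assume "x \<in> f ` {0..N}"
      then obtain k where k: "k \<le> N" "x = f k" by auto
      then have "x = t (Suc k)" "Suc k \<in> {1..2*K}" using K by (auto simp: t_def)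
      then show "x \<in> t ` {1..2*K}" by blast
    qed
  qed
  show ?thesis using Z T I Im by blast
qed



lemma adjA_cases: "adjA x y \<Longrightarrow> (fst x \<le> fst y \<and> snd y \<le> snd x) \<or> (fst y \<le> fst x \<and> snd x \<le> snd y)"
  unfolding adjA_def by (auto simp: mult_le_0_iff)

lemma core:
  assumes mn: "2 \<le> m" "2 \<le> n" and Hmin: "minimal_landmark_set m n X" and c4: "4 \<le> card X"
    and orient: "\<exists>x\<in>X. \<exists>y\<in>X. fst x = 1 \<and> fst y = m \<and> snd x \<le> snd y"
  shows "\<exists>K q t. zigzag m n K q \<and> corresponds m n K q t \<and> inj_on t {1..2*K} \<and> t ` {1..2*K} = X"
proof -
  have L: "landmark_set m n X" and mini: "\<And>L'. L' \<subset> X \<Longrightarrow> \<not> landmark_set m n L'"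
    using Hmin unfolding minimal_landmark_set_def by auto
  have Xg: "X \<subseteq> grid_V m n" using L unfolding landmark_set_def by auto
  have fin: "finite X"
  proof -
    have "grid_V m n \<subseteq> {0..m} \<times> {0..n}" by (auto simp: grid_V_def)
    then show "finite X" using Xg by (meson finite_SigmaI finite_atLeastAtMost finite_subset)
  qed
  have gX: "\<And>x. x \<in> X \<Longrightarrow> 1 \<le> fst x \<and> fst x \<le> m \<and> 1 \<le> snd x \<and> snd x \<le> n"
    using Xg by (auto simp: grid_V_def)
  obtain x0 y0 where xy0: "x0 \<in> X" "y0 \<in> X" "fst x0 = 1" "fst y0 = m" "snd x0 \<le> snd y0"
    using orient by blast
  define S1 where "S1 = {x\<in>X. fst x = 1}"
  define Sm where "Sm = {x\<in>X. fst x = m}"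
  define a where "a = Min (snd ` S1)"
  define b where "b = Max (snd ` Sm)"
  have x0S: "x0 \<in> S1" and y0S: "y0 \<in> Sm" using xy0 unfolding S1_def Sm_def by auto
  have S1f: "finite (snd ` S1)" "snd ` S1 \<noteq> {}" using fin x0S unfolding S1_def by (simp, blast)
  have Smf: "finite (snd ` Sm)" "snd ` Sm \<noteq> {}" using fin y0S unfolding Sm_def by (simp, blast)
  have amin: "\<And>x. x \<in> X \<Longrightarrow> fst x = 1 \<Longrightarrow> a \<le> snd x" using S1f unfolding a_def S1_def by auto
  have bmax: "\<And>x. x \<in> X \<Longrightarrow> fst x = m \<Longrightarrow> snd x \<le> b" using Smf unfolding b_def Sm_def by auto
  obtain x1 where x1: "x1 \<in> S1" "snd x1 = a" using Min_in[OF S1f] unfolding a_def by auto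
  obtain y1 where y1: "y1 \<in> Sm" "snd y1 = b" using Max_in[OF Smf] unfolding b_def by auto
  define u where "u = (1::nat, a)"
  define w where "w = (m, b)"
  have uX: "u \<in> X" using x1 unfolding u_def S1_def by (metis (mono_tags, lifting) mem_Collect_eq prod.collapse)
  have wX: "w \<in> X" using y1 unfolding w_def Sm_def by (metis (mono_tags, lifting) mem_Collect_eq prod.collapse)
  have ab: "a \<le> b" using amin[OF xy0(1) xy0(3)] bmax[OF xy0(2) xy0(4)] xy0(5) by linarith
  have A: "cutA m n X" and Cl: "\<not>(\<exists>c. 1<c \<and> c<n \<and> (\<forall>x\<in>X. snd x = c))"
    using char_fwd[OF mn L] by auto
  have "\<exists>f N. ispath X u w f N"
    using connect[OF mn Xg A uX _ wX] unfolding ispath_def u_def w_def by auto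
  then obtain f N where P: "ispath X u w f N" and dist: "\<forall>i j. i < j \<longrightarrow> j \<le> N \<longrightarrow> f i \<noteq> f j"
    and ind: "\<forall>i j. i + 2 \<le> j \<longrightarrow> j \<le> N \<longrightarrow> \<not> adjA (f i) (f j)"
    using shortest_path by blast
  have f0: "f 0 = u" and fN: "f N = w" and fX: "\<And>k. k \<le> N \<Longrightarrow> f k \<in> X"
    and fa: "\<And>k. k < N \<Longrightarrow> adjA (f k) (f (Suc k))"
    using P unfolding ispath_def by auto
  have fg: "\<And>k. k \<le> N \<Longrightarrow> 1 \<le> fst (f k) \<and> fst (f k) \<le> m \<and> 1 \<le> snd (f k) \<and> snd (f k) \<le> n"
    using fX gX by blast
  have fgr: "\<forall>k\<in>{lo..hi}. f k \<in> grid_V m n" if "hi \<le> N" for lo hi using fX Xg that by auto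
  have N1: "1 \<le> N"
  proof (rule ccontr)
    assume "\<not> 1 \<le> N" then have "N = 0" by simp
    then have "u = w" using f0 fN by simp
    then show False using mn unfolding u_def w_def by simp
  qed
  have fu: "fst (f 0) = 1" "snd (f 0) = a" using f0 unfolding u_def by auto
  have fw: "fst (f N) = m" "snd (f N) = b" using fN unfolding w_def by auto
  have YX: "f ` {0..N} = X"
  proof (cases "\<exists>c. 1<c \<and> c<n \<and> (\<forall>k\<in>{0..N}. snd (f k) = c)")
    case True
    then obtain c where c: "\<forall>k\<in>{0..N}. snd (f k) = c" and cint: "1 < c" "c < n" by blast
    have ac: "a = c" "b = c" using c fu fw N1 by auto
    obtain z where z: "z \<in> X" "snd z \<noteq> c" using Cl cint by blast
    have zg: "1 \<le> fst z" "fst z \<le> m" using gX[OF z(1)] by auto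
    define g where "g = (if snd z < c then (\<lambda>k::nat. if k = 1 then z else if k = 3 then w else u)
                         else (\<lambda>k::nat. if k = 2 then z else if k = 0 then u else w))"
    have gsub: "g ` {0..3} \<subseteq> {u, z, w}" unfolding g_def by auto
    have lm: "landmark_set m n (g ` {0..3})"
    proof (rule path_landmark[OF mn])
      show "\<forall>k\<in>{0..3}. g k \<in> grid_V m n" using gsub uX wX z(1) Xg by blast
      show "(0::nat) \<le> 3" by simp
      show "fst (g 0) = 1" unfolding g_def u_def by auto
      show "fst (g 3) = m" unfolding g_def w_def by auto
      show "snd (g 0) \<le> snd (g 3)" unfolding g_def u_def w_def using ab by auto
      show "\<forall>k. 0 \<le> k \<longrightarrow> k < 3 \<longrightarrow> adjA (g k) (g (Suc k))"
      proof (intro allI impI)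
        fix k :: nat assume k: "0 \<le> k" "k < 3"
        then consider "k = 0" | "k = 1" | "k = 2" by linarith
        then show "adjA (g k) (g (Suc k))"
        proof cases
          case 1 then show ?thesis unfolding g_def using z zg ac
            by (auto intro!: adjA_SW simp: u_def w_def)
        next
          case 2 then show ?thesis unfolding g_def using z zg ac
            by (auto intro!: adjA_NE simp: u_def w_def)
        next
          case 3 then show ?thesis unfolding g_def using z zg ac
            by (auto intro!: adjA_SW simp: u_def w_def)
        qed
      qed
      show "\<not>(\<exists>c'. 1<c' \<and> c'<n \<and> (\<forall>k\<in>{0..3}. snd (g k) = c'))"
      proof
        assume "\<exists>c'. 1<c' \<and> c'<n \<and> (\<forall>k\<in>{0..3}. snd (g k) = c')"
        then obtain c' where c': "\<forall>k\<in>{0..3::nat}. snd (g k) = c'" by blast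
        have "snd (g 0) = c'" "snd (g 1) = c'" "snd (g 2) = c'" using c' by auto
        then show False unfolding g_def using z ac by (auto simp: u_def w_def split: if_splits)
      qed
    qed
    have "card (g ` {0..3}) \<le> card {u, z, w}" by (rule card_mono) (use gsub in auto)
    also have "\<dots> \<le> 3" by (simp add: card_insert_if)
    finally have "g ` {0..3} \<noteq> X" using c4 by auto
    moreover have "g ` {0..3} \<subseteq> X" using gsub uX wX z(1) by blast
    ultimately show ?thesis using mini lm by blast
  next
    case False
    have lm: "landmark_set m n (f ` {0..N})"
      by (rule path_landmark[OF mn fgr[OF le_refl]]) (use fu fw ab fa False in auto)
    have "f ` {0..N} \<subseteq> X" using fX by auto
    then show ?thesis using mini lm by blast
  qed
  have inj: "inj_on f {0..N}"
  proof (rule inj_onI)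
    fix x y assume "x \<in> {0..N}" "y \<in> {0..N}" "f x = f y"
    then show "x = y" using dist by (metis atLeastAtMost_iff linorder_neqE_nat)
  qed
  have cardX: "card X = N + 1" using YX card_image[OF inj] by auto
  have N3: "3 \<le> N" using cardX c4 by auto
  have pr: "\<forall>j. i + 2 \<le> j \<longrightarrow> j \<le> N \<longrightarrow> prec (f i) (f j)" for i
  proof (induction i)
    case 0 show ?case
    proof (intro allI impI)
      fix j assume j: "0 + 2 \<le> j" "j \<le> N"
      have "prec (f 0) (f j) \<or> prec (f j) (f 0)" using ind j not_adjA by blast
      moreover have "\<not> prec (f j) (f 0)" using fg[OF j(2)] fu unfolding prec_def by auto
      ultimately show "prec (f 0) (f j)" by blast
    qed
  next
    case (Suc i) show ?case
    proof (intro allI impI)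
      fix j assume j: "Suc i + 2 \<le> j" "j \<le> N"
      have "prec (f (Suc i)) (f j) \<or> prec (f j) (f (Suc i))" using ind j not_adjA by blast
      moreover have "\<not> prec (f j) (f (Suc i))"
      proof
        assume "prec (f j) (f (Suc i))"
        moreover have "prec (f i) (f j)" using Suc.IH j by auto
        ultimately have "prec (f i) (f (Suc i))" using prec_trans by blast
        moreover have "adjA (f i) (f (Suc i))" using fa j by auto
        ultimately show False using prec_adjA by blast
      qed
      ultimately show "prec (f (Suc i)) (f j)" by blast
    qed
  qed
  have prx: "\<And>i j. i+2 \<le> j \<Longrightarrow> j \<le> N \<Longrightarrow> fst (f i) < fst (f j) \<and> snd (f i) < snd (f j)"
    using pr unfolding prec_def by blast
  have notNE0: "\<not> (fst (f 1) \<le> fst (f 0) \<and> snd (f 0) \<le> snd (f 1))"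
  proof
    assume ne0: "fst (f 1) \<le> fst (f 0) \<and> snd (f 0) \<le> snd (f 1)"
    have r1: "fst (f 1) = 1" using ne0 fu fg[of 1] N1 by auto
    have lt: "snd (f 1) < snd (f N)" using prx[of 1 N] N3 by auto
    have lm: "landmark_set m n (f ` {1..N})"
    proof (rule path_landmark[OF mn fgr[OF le_refl]])
      show "1 \<le> N" by (rule N1)
      show "fst (f 1) = 1" by (rule r1)
      show "fst (f N) = m" by (rule fw(1))
      show "snd (f 1) \<le> snd (f N)" using lt by simp
      show "\<forall>k. 1 \<le> k \<longrightarrow> k < N \<longrightarrow> adjA (f k) (f (Suc k))" using fa by auto
      show "\<not>(\<exists>c. 1<c \<and> c<n \<and> (\<forall>k\<in>{1..N}. snd (f k) = c))"
      proof
        assume "\<exists>c. 1<c \<and> c<n \<and> (\<forall>k\<in>{1..N}. snd (f k) = c)"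
        then obtain c where "\<forall>k\<in>{1..N}. snd (f k) = c" by blast
        then have "snd (f 1) = c" "snd (f N) = c" using N1 by auto
        then show False using lt by simp
      qed
    qed
    have "f ` {1..N} \<subseteq> X" using fX by auto
    moreover have "u \<notin> f ` {1..N}" using dist f0 by fastforce
    ultimately have "f ` {1..N} \<subset> X" using uX by blast
    then show False using mini lm by blast
  qed
  have SW0: "fst (f 0) \<le> fst (f 1) \<and> snd (f 1) \<le> snd (f 0)"
    using adjA_cases[OF fa[of 0]] N1 notNE0 by auto
  have f1: "1 < fst (f 1)"
  proof (rule ccontr)
    assume "\<not> 1 < fst (f 1)"
    then have r1: "fst (f 1) = 1" using fg[of 1] N1 by auto
    then have "a \<le> snd (f 1)" using amin fX[of 1] N1 by auto
    then have "snd (f 1) = a" using SW0 fu by auto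
    then have "f 1 = f 0" using r1 fu by (simp add: prod_eq_iff)
    then show False using dist[rule_format, of 0 1] N1 by auto
  qed
  have notNEl: "\<not> (fst (f N) \<le> fst (f (N-1)) \<and> snd (f (N-1)) \<le> snd (f N))"
  proof
    assume nel: "fst (f N) \<le> fst (f (N-1)) \<and> snd (f (N-1)) \<le> snd (f N)"
    have rm: "fst (f (N-1)) = m" using nel fw fg[of "N-1"] by auto
    have lt: "snd (f 0) < snd (f (N-1))" using prx[of 0 "N-1"] N3 by auto
    have lm: "landmark_set m n (f ` {0..N-1})"
    proof (rule path_landmark[OF mn fgr])
      show "N - 1 \<le> N" by simp
      show "0 \<le> N - 1" by simp
      show "fst (f 0) = 1" by (rule fu(1))
      show "fst (f (N-1)) = m" by (rule rm)
      show "snd (f 0) \<le> snd (f (N-1))" using lt by simp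
      show "\<forall>k. 0 \<le> k \<longrightarrow> k < N - 1 \<longrightarrow> adjA (f k) (f (Suc k))" using fa by auto
      show "\<not>(\<exists>c. 1<c \<and> c<n \<and> (\<forall>k\<in>{0..N-1}. snd (f k) = c))"
      proof
        assume "\<exists>c. 1<c \<and> c<n \<and> (\<forall>k\<in>{0..N-1}. snd (f k) = c)"
        then obtain c where "\<forall>k\<in>{0..N-1}. snd (f k) = c" by blast
        then have "snd (f 0) = c" "snd (f (N-1)) = c" by auto
        then show False using lt by simp
      qed
    qed
    have "f ` {0..N-1} \<subseteq> X" using fX by auto
    moreover have "w \<notin> f ` {0..N-1}"
    proof
      assume "w \<in> f ` {0..N-1}"
      then obtain k where k: "k \<le> N - 1" "f k = f N" using fN by auto
      then have "k < N" using N1 by linarith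
      then show False using dist[rule_format, of k N] k by auto
    qed
    ultimately have "f ` {0..N-1} \<subset> X" using wX by blast
    then show False using mini lm by blast
  qed
  have alt: "k < N \<Longrightarrow> (even k \<longrightarrow> fst (f k) \<le> fst (f (Suc k)) \<and> snd (f (Suc k)) \<le> snd (f k)) \<and>
                    (odd k \<longrightarrow> fst (f (Suc k)) \<le> fst (f k) \<and> snd (f k) \<le> snd (f (Suc k)))" for k
  proof (induction k)
    case 0 then show ?case using SW0 by simp
  next
    case (Suc k)
    then have IH: "(even k \<longrightarrow> fst (f k) \<le> fst (f (Suc k)) \<and> snd (f (Suc k)) \<le> snd (f k)) \<and>
                    (odd k \<longrightarrow> fst (f (Suc k)) \<le> fst (f k) \<and> snd (f k) \<le> snd (f (Suc k)))" by auto
    have c: "(fst (f (Suc k)) \<le> fst (f (Suc (Suc k))) \<and> snd (f (Suc (Suc k))) \<le> snd (f (Suc k))) \<or>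
             (fst (f (Suc (Suc k))) \<le> fst (f (Suc k)) \<and> snd (f (Suc k)) \<le> snd (f (Suc (Suc k))))"
      using adjA_cases[OF fa[of "Suc k"]] Suc.prems by auto
    have p: "fst (f k) < fst (f (Suc (Suc k))) \<and> snd (f k) < snd (f (Suc (Suc k)))"
      using prx[of k "Suc (Suc k)"] Suc.prems by auto
    show ?case using IH c p by auto
  qed
  have Nodd: "odd N"
  proof (rule ccontr)
    assume "\<not> odd N"
    then have "odd (N - 1)" using N1 by simp
    then have "fst (f (Suc (N-1))) \<le> fst (f (N-1)) \<and> snd (f (N-1)) \<le> snd (f (Suc (N-1)))"
      using alt[of "N-1"] N1 by auto
    then show False using notNEl N1 by simp
  qed
  have "\<exists>K q t. zigzag m n K q \<and> corresponds m n K q t \<and> inj_on t {1..2*K} \<and> t ` {1..2*K} = f ` {0..N}"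
  proof (rule zig_from_path[OF mn])
    show "\<forall>k\<le>N. f k \<in> grid_V m n" using fX Xg by auto
    show "fst (f 0) = 1" by (rule fu(1))
    show "fst (f N) = m" by (rule fw(1))
    show "1 < fst (f 1)" by (rule f1)
    show "3 \<le> N" by (rule N3)
    show "odd N" by (rule Nodd)
    show "\<forall>i j. i+2 \<le> j \<longrightarrow> j \<le> N \<longrightarrow> prec (f i) (f j)" using pr by blast
    show "\<forall>k<N. even k \<longrightarrow> fst (f k) \<le> fst (f (Suc k)) \<and> snd (f (Suc k)) \<le> snd (f k)" using alt by blast
    show "\<forall>k<N. odd k \<longrightarrow> fst (f (Suc k)) \<le> fst (f k) \<and> snd (f k) \<le> snd (f (Suc k))" using alt by blast
    show "\<forall>i j. i<j \<longrightarrow> j \<le> N \<longrightarrow> f i \<noteq> f j" by (rule dist)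
  qed
  then show ?thesis using YX by simp
qed



lemma sym_grid:
  assumes "v \<in> grid_V m n"
  shows "grid_sym s m n v \<in> grid_V (fst (grid_sym_dims s m n)) (snd (grid_sym_dims s m n))"
proof -
  obtain sw fr fc where s: "s = (sw, fr, fc)" by (cases s) blast
  show ?thesis using assms unfolding s
    by (cases sw; cases fr; cases fc) (auto simp: grid_sym_def grid_V_def grid_sym_dims_def Let_def split: if_splits)
qed

lemma syminv_grid:
  assumes "w \<in> grid_V (fst (grid_sym_dims s m n)) (snd (grid_sym_dims s m n))"
  shows "grid_sym_inv s m n w \<in> grid_V m n"
proof -
  obtain sw fr fc where s: "s = (sw, fr, fc)" by (cases s) blast
  show ?thesis using assms unfolding s
    by (cases sw; cases fr; cases fc) (auto simp: grid_sym_inv_def grid_V_def grid_sym_dims_def Let_def split: if_splits)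
qed

lemma sym_inv1:
  assumes "v \<in> grid_V m n"
  shows "grid_sym_inv s m n (grid_sym s m n v) = v"
proof -
  obtain sw fr fc where s: "s = (sw, fr, fc)" by (cases s) blast
  show ?thesis using assms unfolding s
    by (cases sw; cases fr; cases fc) (auto simp: grid_sym_def grid_sym_inv_def grid_V_def Let_def prod_eq_iff split: if_splits)
qed

lemma sym_inv2:
  assumes "w \<in> grid_V (fst (grid_sym_dims s m n)) (snd (grid_sym_dims s m n))"
  shows "grid_sym s m n (grid_sym_inv s m n w) = w"
proof -
  obtain sw fr fc where s: "s = (sw, fr, fc)" by (cases s) blast
  show ?thesis using assms unfolding s
    by (cases sw; cases fr; cases fc) (auto simp: grid_sym_def grid_sym_inv_def grid_V_def grid_sym_dims_def Let_def prod_eq_iff split: if_splits)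
qed

lemma sym_dist:
  assumes "u \<in> grid_V m n" "v \<in> grid_V m n"
  shows "grid_dist (grid_sym s m n u) (grid_sym s m n v) = grid_dist u v"
proof -
  obtain sw fr fc where s: "s = (sw, fr, fc)" by (cases s) blast
  show ?thesis using assms unfolding s
    by (cases sw; cases fr; cases fc) (auto simp: grid_sym_def grid_dist_def grid_V_def Let_def split: if_splits)
qed



lemma landmark_sym:
  assumes L: "landmark_set m n X"
  shows "landmark_set (fst (grid_sym_dims s m n)) (snd (grid_sym_dims s m n)) (grid_sym s m n ` X)"
proof -
  let ?m = "fst (grid_sym_dims s m n)" and ?n = "snd (grid_sym_dims s m n)"
  have Xg: "X \<subseteq> grid_V m n" using L unfolding landmark_set_def by auto
  show ?thesis unfolding landmark_set_def
  proof (intro conjI ballI impI)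
    show "grid_sym s m n ` X \<subseteq> grid_V ?m ?n" using Xg sym_grid by blast
    fix u' v' assume u': "u' \<in> grid_V ?m ?n" and v': "v' \<in> grid_V ?m ?n" and ne: "u' \<noteq> v'"
    define u where "u = grid_sym_inv s m n u'"
    define v where "v = grid_sym_inv s m n v'"
    have ug: "u \<in> grid_V m n" "v \<in> grid_V m n" using u' v' syminv_grid unfolding u_def v_def by auto
    have uu: "grid_sym s m n u = u'" "grid_sym s m n v = v'" using u' v' sym_inv2 unfolding u_def v_def by auto
    have "u \<noteq> v" using ne uu by auto
    then obtain x where x: "x \<in> X" "separates x u v" using L ug unfolding landmark_set_def by blast
    have "separates (grid_sym s m n x) u' v'"
      using x Xg ug uu sym_dist[of x m n u s] sym_dist[of x m n v s] unfolding separates_def by auto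
    then show "\<exists>x\<in>grid_sym s m n ` X. separates x u' v'" using x by blast
  qed
qed

lemma landmark_syminv:
  assumes L: "landmark_set (fst (grid_sym_dims s m n)) (snd (grid_sym_dims s m n)) Y"
  shows "landmark_set m n (grid_sym_inv s m n ` Y)"
proof -
  let ?m = "fst (grid_sym_dims s m n)" and ?n = "snd (grid_sym_dims s m n)"
  have Yg: "Y \<subseteq> grid_V ?m ?n" using L unfolding landmark_set_def by auto
  show ?thesis unfolding landmark_set_def
  proof (intro conjI ballI impI)
    show "grid_sym_inv s m n ` Y \<subseteq> grid_V m n" using Yg syminv_grid by blast
    fix u v assume u: "u \<in> grid_V m n" and v: "v \<in> grid_V m n" and ne: "u \<noteq> v"
    define u' where "u' = grid_sym s m n u"
    define v' where "v' = grid_sym s m n v"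
    have ug: "u' \<in> grid_V ?m ?n" "v' \<in> grid_V ?m ?n" using u v sym_grid unfolding u'_def v'_def by auto
    have "u' \<noteq> v'" using ne sym_inv1 u v unfolding u'_def v'_def by metis
    then obtain y where y: "y \<in> Y" "separates y u' v'" using L ug unfolding landmark_set_def by blast
    have yg: "y \<in> grid_V ?m ?n" using y Yg by auto
    define x where "x = grid_sym_inv s m n y"
    have xg: "x \<in> grid_V m n" using yg syminv_grid unfolding x_def by auto
    have xy: "grid_sym s m n x = y" using yg sym_inv2 unfolding x_def by auto
    have "separates x u v"
      using y xy sym_dist[of x m n u s] sym_dist[of x m n v s] xg u v unfolding separates_def u'_def v'_def by auto
    then show "\<exists>x\<in>grid_sym_inv s m n ` Y. separates x u v" using y unfolding x_def by blast
  qed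
qed

lemma minimal_sym:
  assumes M: "minimal_landmark_set m n X"
  shows "minimal_landmark_set (fst (grid_sym_dims s m n)) (snd (grid_sym_dims s m n)) (grid_sym s m n ` X)"
proof -
  let ?m = "fst (grid_sym_dims s m n)" and ?n = "snd (grid_sym_dims s m n)"
  have L: "landmark_set m n X" and mini: "\<And>L'. L' \<subset> X \<Longrightarrow> \<not> landmark_set m n L'"
    using M unfolding minimal_landmark_set_def by auto
  have Xg: "X \<subseteq> grid_V m n" using L unfolding landmark_set_def by auto
  show ?thesis unfolding minimal_landmark_set_def
  proof (intro conjI allI impI)
    show "landmark_set ?m ?n (grid_sym s m n ` X)" by (rule landmark_sym[OF L])
    fix L' assume sub: "L' \<subset> grid_sym s m n ` X"
    show "\<not> landmark_set ?m ?n L'"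
    proof
      assume lL: "landmark_set ?m ?n L'"
      have l2: "landmark_set m n (grid_sym_inv s m n ` L')" by (rule landmark_syminv[OF lL])
      have "(grid_sym_inv s m n \<circ> grid_sym s m n) ` X = id ` X"
        by (rule image_cong) (simp_all, metis Xg subsetD sym_inv1)
      then have bk: "grid_sym_inv s m n ` (grid_sym s m n ` X) = X" by (simp add: image_comp)
      have "grid_sym_inv s m n ` L' \<subseteq> X" using sub bk by blast
      moreover have "grid_sym_inv s m n ` L' \<noteq> X"
      proof
        assume eq: "grid_sym_inv s m n ` L' = X"
        have L'g: "L' \<subseteq> grid_V ?m ?n" using lL unfolding landmark_set_def by auto
        have "(grid_sym s m n \<circ> grid_sym_inv s m n) ` L' = id ` L'"
          by (rule image_cong) (simp_all, metis L'g subsetD sym_inv2)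
        then have "grid_sym s m n ` X = L'" unfolding eq[symmetric] by (simp add: image_comp)
        then show False using sub by blast
      qed
      ultimately show False using mini l2 by blast
    qed
  qed
qed

lemma card_sym:
  assumes "X \<subseteq> grid_V m n"
  shows "card (grid_sym s m n ` X) = card X"
proof -
  have "inj_on (grid_sym s m n) X"
    by (rule inj_on_inverseI[where g = "grid_sym_inv s m n"]) (use assms sym_inv1 in blast)
  then show ?thesis by (rule card_image)
qed



lemma orient_witness:
  assumes "x \<in> X" "y \<in> X" "fst (grid_sym s m n x) = 1"
    "fst (grid_sym s m n y) = fst (grid_sym_dims s m n)" "snd (grid_sym s m n x) \<le> snd (grid_sym s m n y)"
  shows "\<exists>s. \<exists>x\<in>grid_sym s m n ` X. \<exists>y\<in>grid_sym s m n ` X.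
           fst x = 1 \<and> fst y = fst (grid_sym_dims s m n) \<and> snd x \<le> snd y"
  using assms by blast

lemma orientation:
  assumes mn: "2 \<le> m" "2 \<le> n" and L: "landmark_set m n X"
  shows "\<exists>s. \<exists>x\<in>grid_sym s m n ` X. \<exists>y\<in>grid_sym s m n ` X.
           fst x = 1 \<and> fst y = fst (grid_sym_dims s m n) \<and> snd x \<le> snd y"
proof -
  have Xg: "X \<subseteq> grid_V m n" using L unfolding landmark_set_def by auto
  have gX: "\<And>x. x \<in> X \<Longrightarrow> 1 \<le> fst x \<and> fst x \<le> m \<and> 1 \<le> snd x \<and> snd x \<le> n"
    using Xg by (auto simp: grid_V_def)
  have A: "cutA m n X" and D: "cutD m n X" using char_fwd[OF mn L] by auto
  have h: "1 < m" "1 < n" "1 \<le> m - 1" "1 \<le> n - 1" "m - 1 < m" "n - 1 < n" using mn by auto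
  have B1: "\<exists>x\<in>X. fst x = 1 \<or> snd x = 1"
  proof -
    obtain x where x: "x \<in> X" "(fst x \<le> 1 \<and> 1 < snd x) \<or> (1 < fst x \<and> snd x \<le> 1)"
      using A[unfolded cutA_def, rule_format, OF order.refl h(1) order.refl h(2)] by blast
    then have "fst x = 1 \<or> snd x = 1" using gX[OF x(1)] by auto
    then show ?thesis using x(1) by blast
  qed
  have B2: "\<exists>x\<in>X. fst x = m \<or> snd x = n"
  proof -
    obtain x where x: "x \<in> X" "(fst x \<le> m-1 \<and> n-1 < snd x) \<or> (m-1 < fst x \<and> snd x \<le> n-1)"
      using A[unfolded cutA_def, rule_format, OF h(3) h(5) h(4) h(6)] by blast
    then have "fst x = m \<or> snd x = n" using gX[OF x(1)] by auto
    then show ?thesis using x(1) by blast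
  qed
  have B3: "\<exists>x\<in>X. fst x = 1 \<or> snd x = n"
  proof -
    obtain x where x: "x \<in> X" "(fst x \<le> 1 \<and> snd x \<le> n-1) \<or> (1 < fst x \<and> n-1 < snd x)"
      using D[unfolded cutD_def, rule_format, OF order.refl h(1) h(4) h(6)] by blast
    then have "fst x = 1 \<or> snd x = n" using gX[OF x(1)] by auto
    then show ?thesis using x(1) by blast
  qed
  have B4: "\<exists>x\<in>X. fst x = m \<or> snd x = 1"
  proof -
    obtain x where x: "x \<in> X" "(fst x \<le> m-1 \<and> snd x \<le> 1) \<or> (m-1 < fst x \<and> 1 < snd x)"
      using D[unfolded cutD_def, rule_format, OF h(3) h(5) order.refl h(2)] by blast
    then have "fst x = m \<or> snd x = 1" using gX[OF x(1)] by auto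
    then show ?thesis using x(1) by blast
  qed
  have cases: "((\<exists>x\<in>X. fst x = 1) \<and> (\<exists>y\<in>X. fst y = m)) \<or> ((\<exists>x\<in>X. snd x = 1) \<and> (\<exists>y\<in>X. snd y = n))"
    using B1 B2 B3 B4 by blast
  then show ?thesis
  proof
    assume "(\<exists>x\<in>X. fst x = 1) \<and> (\<exists>y\<in>X. fst y = m)"
    then obtain x y where xy: "x \<in> X" "y \<in> X" "fst x = 1" "fst y = m" by blast
    have g: "snd y \<le> n" "snd x \<le> n" using gX xy by auto
    show ?thesis
    proof (cases "snd x \<le> snd y")
      case True
      show ?thesis
        by (rule orient_witness[OF xy(1,2), of "(False,False,False)"])
          (use xy True g in \<open>auto simp: grid_sym_def grid_sym_dims_def\<close>)
    next
      case False
      show ?thesis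
        by (rule orient_witness[OF xy(1,2), of "(False,False,True)"])
          (use xy False g in \<open>auto simp: grid_sym_def grid_sym_dims_def\<close>)
    qed
  next
    assume "(\<exists>x\<in>X. snd x = 1) \<and> (\<exists>y\<in>X. snd y = n)"
    then obtain x y where xy: "x \<in> X" "y \<in> X" "snd x = 1" "snd y = n" by blast
    have g: "fst y \<le> m" "fst x \<le> m" using gX xy by auto
    show ?thesis
    proof (cases "fst x \<le> fst y")
      case True
      show ?thesis
        by (rule orient_witness[OF xy(1,2), of "(True,False,False)"])
          (use xy True g in \<open>auto simp: grid_sym_def grid_sym_dims_def\<close>)
    next
      case False
      show ?thesis
        by (rule orient_witness[OF xy(1,2), of "(True,True,False)"])
          (use xy False g in \<open>auto simp: grid_sym_def grid_sym_dims_def\<close>)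
    qed
  qed
qed



theorem mainTheorem1:
  fixes m n :: nat and c :: "vertex \<Rightarrow> rat"
  assumes "m \<ge> 2" and "n \<ge> 2"
    and "\<forall>v\<in>grid_V m n. c v \<ge> 0"
  shows "(\<forall>k q t. zigzag m n k q \<longrightarrow> corresponds m n k q t \<longrightarrow>
            landmark_set m n (t ` {1..2*k}))
    \<and> (\<forall>L. minimal_landmark_set m n L \<longrightarrow> min_cost_landmark_set m n c L \<longrightarrow> card L \<ge> 4 \<longrightarrow>
         (\<exists>s :: gsym. \<exists>k q t.
             zigzag (fst (grid_sym_dims s m n)) (snd (grid_sym_dims s m n)) k q \<and>
             perfect (fst (grid_sym_dims s m n)) (snd (grid_sym_dims s m n))
                     (c \<circ> grid_sym_inv s m n) k q t \<and>
             inj_on t {1..2*k} \<and>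
             t ` {1..2*k} = grid_sym s m n ` L))"
proof (intro conjI allI impI)
  have mn: "2 \<le> m" "2 \<le> n" using assms by auto
  have cnn: "\<And>v. v \<in> grid_V m n \<Longrightarrow> 0 \<le> c v" using assms by auto
  {
    fix k q t assume "zigzag m n k q" "corresponds m n k q t"
    then show "landmark_set m n (t ` {1..2*k})" using part_i[OF mn] by blast
  }
  fix L assume M: "minimal_landmark_set m n L" and C: "min_cost_landmark_set m n c L" and c4: "card L \<ge> 4"
  have LL: "landmark_set m n L" using M unfolding minimal_landmark_set_def by auto
  have Lg: "L \<subseteq> grid_V m n" using LL unfolding landmark_set_def by auto
  obtain s where ori: "\<exists>x\<in>grid_sym s m n ` L. \<exists>y\<in>grid_sym s m n ` L.
           fst x = 1 \<and> fst y = fst (grid_sym_dims s m n) \<and> snd x \<le> snd y"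
    using orientation[OF mn LL] by blast
  define m' where "m' = fst (grid_sym_dims s m n)"
  define n' where "n' = snd (grid_sym_dims s m n)"
  define \<sigma> where "\<sigma> = grid_sym s m n"
  define \<tau> where "\<tau> = grid_sym_inv s m n"
  have mn': "2 \<le> m'" "2 \<le> n'" using mn unfolding m'_def n'_def grid_sym_dims_def by auto
  have M': "minimal_landmark_set m' n' (\<sigma> ` L)" using minimal_sym[OF M] unfolding m'_def n'_def \<sigma>_def .
  have c4': "4 \<le> card (\<sigma> ` L)" using card_sym[OF Lg] c4 unfolding \<sigma>_def by simp
  obtain K q t where Z: "zigzag m' n' K q" and T: "corresponds m' n' K q t"
    and I: "inj_on t {1..2*K}" and Im: "t ` {1..2*K} = \<sigma> ` L"
    using core[OF mn' M' c4'] ori unfolding m'_def \<sigma>_def by blast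
  have injs: "inj_on \<sigma> L"
    by (rule inj_on_inverseI[where g = \<tau>]) (unfold \<sigma>_def \<tau>_def, metis Lg subsetD sym_inv1)
  have costt: "seq_cost (c \<circ> \<tau>) K t = sum c L"
  proof -
    have "seq_cost (c \<circ> \<tau>) K t = sum ((c \<circ> \<tau>) \<circ> t) {1..2*K}" by (simp add: seq_cost_def comp_def)
    also have "\<dots> = sum (c \<circ> \<tau>) (t ` {1..2*K})" by (rule sum.reindex[OF I, symmetric])
    also have "\<dots> = sum (c \<circ> \<tau>) (\<sigma> ` L)" using Im by simp
    also have "\<dots> = sum ((c \<circ> \<tau>) \<circ> \<sigma>) L" by (rule sum.reindex[OF injs])
    also have "\<dots> = sum c L"
    proof (rule sum.cong)
      fix x assume "x \<in> L"
      then have "\<tau> (\<sigma> x) = x" using Lg sym_inv1 unfolding \<sigma>_def \<tau>_def by blast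
      then show "((c \<circ> \<tau>) \<circ> \<sigma>) x = c x" by simp
    qed simp
    finally show ?thesis .
  qed
  have P: "perfect m' n' (c \<circ> \<tau>) K q t" unfolding perfect_def
  proof (intro conjI allI impI)
    show "corresponds m' n' K q t" by (rule T)
    fix t' assume T': "corresponds m' n' K q t'"
    define Y where "Y = t' ` {1..2*K}"
    have Yg: "Y \<subseteq> grid_V m' n'" using T' unfolding Y_def corresponds_def by auto
    have lY: "landmark_set m' n' Y" unfolding Y_def by (rule part_i[OF mn' Z T'])
    have lZ: "landmark_set m n (\<tau> ` Y)" using landmark_syminv[of s m n Y] lY unfolding \<tau>_def m'_def n'_def by simp
    have nn: "\<And>y. y \<in> Y \<Longrightarrow> 0 \<le> (c \<circ> \<tau>) y"
    proof -
      fix y assume "y \<in> Y"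
      then have "\<tau> y \<in> grid_V m n" using Yg syminv_grid unfolding \<tau>_def m'_def n'_def by blast
      then show "0 \<le> (c \<circ> \<tau>) y" using cnn by simp
    qed
    have "sum c L \<le> sum c (\<tau> ` Y)" using C lZ unfolding min_cost_landmark_set_def by blast
    also have "\<dots> \<le> sum (c \<circ> \<tau>) Y"
      by (rule sum_image_le) (use nn in \<open>auto simp: Y_def\<close>)
    also have "\<dots> \<le> sum ((c \<circ> \<tau>) \<circ> t') {1..2*K}" unfolding Y_def
      by (rule sum_image_le) (use nn in \<open>auto simp: Y_def\<close>)
    also have "\<dots> = seq_cost (c \<circ> \<tau>) K t'" by (simp add: seq_cost_def comp_def)
    finally show "seq_cost (c \<circ> \<tau>) K t \<le> seq_cost (c \<circ> \<tau>) K t'" using costt by simp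
  qed
  show "\<exists>s :: gsym. \<exists>k q t.
             zigzag (fst (grid_sym_dims s m n)) (snd (grid_sym_dims s m n)) k q \<and>
             perfect (fst (grid_sym_dims s m n)) (snd (grid_sym_dims s m n))
                     (c \<circ> grid_sym_inv s m n) k q t \<and>
             inj_on t {1..2*k} \<and>
             t ` {1..2*k} = grid_sym s m n ` L"
    using Z P I Im unfolding m'_def n'_def \<sigma>_def \<tau>_def by blast
qed

end
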